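(* Let $M(i)$ be a maximal matching of $G(i)$ and let $V_{cover}(i)$ be the set of endpoints of edges of $M(i)$, which is a $2$-approximate minimum vertex cover of $G(i)$. If $i\le j\le i+\frac14|M(i)|$, then $V_{cover}(i\rightarrow j)$ is a $5$-approximation to the minimum vertex cover of $G(j)$.
   Context: A graph undergoes a sequence of updates numbered $1,2,\dots$, each inserting or deleting one edge; $G(i)$ is the graph after the $i$-th update. A matching is maximal if no edge of the graph has both endpoints unmatched. $V_{cover}(i\rightarrow j)$ is obtained from $V_{cover}(i)$ by adding all endpoints of edges inserted during updates $i+1,\dots,j$; it is a vertex cover of $G(j)$. A set is an $\alpha$-approximation to the minimum vertex cover if it is a vertex cover of size at most $\alpha$ times the minimum vertex cover size. *)

theory Defs
  imports Complex_Main
begin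

text \<open>Undirected simple graphs are represented by their edge sets; an edge is a
two-element vertex set.\<close>

definition is_edge :: "'a set \<Rightarrow> bool" where
  "is_edge e \<longleftrightarrow> (\<exists>u v. u \<noteq> v \<and> e = {u, v})"

definition graph :: "'a set set \<Rightarrow> bool" where
  "graph E \<longleftrightarrow> finite E \<and> (\<forall>e\<in>E. is_edge e)"

definition matching :: "'a set set \<Rightarrow> 'a set set \<Rightarrow> bool" where
  "matching M E \<longleftrightarrow> M \<subseteq> E \<and> (\<forall>e1\<in>M. \<forall>e2\<in>M. e1 \<noteq> e2 \<longrightarrow> e1 \<inter> e2 = {})"

definition maximal_matching :: "'a set set \<Rightarrow> 'a set set \<Rightarrow> bool" where
  "maximal_matching M E \<longleftrightarrow> matching M E \<and> (\<forall>e\<in>E. e \<inter> \<Union>M \<noteq> {})"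

definition vertex_cover :: "'a set \<Rightarrow> 'a set set \<Rightarrow> bool" where
  "vertex_cover C E \<longleftrightarrow> (\<forall>e\<in>E. e \<inter> C \<noteq> {})"

definition min_vc_size :: "'a set set \<Rightarrow> nat" where
  "min_vc_size E = (LEAST n. \<exists>C. finite C \<and> vertex_cover C E \<and> card C = n)"

definition approx_min_vc :: "real \<Rightarrow> 'a set \<Rightarrow> 'a set set \<Rightarrow> bool" where
  "approx_min_vc \<alpha> C E \<longleftrightarrow> finite C \<and> vertex_cover C E \<and> real (card C) \<le> \<alpha> * real (min_vc_size E)"

definition update_sequence :: "(nat \<Rightarrow> 'a set set) \<Rightarrow> bool" where
  "update_sequence G \<longleftrightarrow> graph (G 0) \<and>
     (\<forall>k\<ge>1. (\<exists>e. is_edge e \<and> e \<notin> G (k - 1) \<and> G k = insert e (G (k - 1)))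
            \<or> (\<exists>e. e \<in> G (k - 1) \<and> G k = G (k - 1) - {e}))"

definition inserted :: "(nat \<Rightarrow> 'a set set) \<Rightarrow> nat \<Rightarrow> 'a set set" where
  "inserted G k = G k - G (k - 1)"

text \<open>V_cover(i \<rightarrow> j): C plus all endpoints of edges inserted during updates i+1..j.\<close>
definition cover_extend :: "(nat \<Rightarrow> 'a set set) \<Rightarrow> 'a set \<Rightarrow> nat \<Rightarrow> nat \<Rightarrow> 'a set" where
  "cover_extend G C i j = C \<union> (\<Union>k\<in>{i<..j}. \<Union>(inserted G k))"

end

theory Submission
  imports Defs
begin

lemma edge_card: "is_edge e \<Longrightarrow> card e = 2 \<and> finite e"
  unfolding is_edge_def by auto

lemma step_cases:
  assumes "update_sequence G"
  shows "(\<exists>e. is_edge e \<and> e \<notin> G k \<and> G (Suc k) = insert e (G k))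
            \<or> (\<exists>e. e \<in> G k \<and> G (Suc k) = G k - {e})"
proof -
  have "\<forall>k\<ge>1. (\<exists>e. is_edge e \<and> e \<notin> G (k - 1) \<and> G k = insert e (G (k - 1)))
            \<or> (\<exists>e. e \<in> G (k - 1) \<and> G k = G (k - 1) - {e})"
    using assms unfolding update_sequence_def by blast
  from spec[OF this, of "Suc k"] show ?thesis by simp
qed

lemma graph_all:
  assumes "update_sequence G" shows "graph (G k)"
proof (induction k)
  case 0 then show ?case using assms unfolding update_sequence_def by simp
next
  case (Suc k)
  have "(\<exists>e. is_edge e \<and> e \<notin> G k \<and> G (Suc k) = insert e (G k))
            \<or> (\<exists>e. e \<in> G k \<and> G (Suc k) = G k - {e})"
    using step_cases[OF assms] by blast
  then show ?case using Suc unfolding graph_def by auto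
qed

lemma inserted_from:
  assumes "update_sequence G"
  shows "e \<in> G (i+d) \<Longrightarrow> e \<notin> G i \<Longrightarrow> \<exists>k\<in>{i<..i+d}. e \<in> inserted G k"
proof (induction d)
  case 0 then show ?case by simp
next
  case (Suc d)
  show ?case
  proof (cases "e \<in> G (i+d)")
    case True
    then obtain k where "k\<in>{i<..i+d}" "e \<in> inserted G k" using Suc by blast
    then show ?thesis by (intro bexI[of _ k]) auto
  next
    case False
    then show ?thesis using Suc.prems unfolding inserted_def
      by (intro bexI[of _ "Suc (i+d)"]) auto
  qed
qed

lemma inserted_card:
  assumes "update_sequence G"
  shows "finite (\<Union>(inserted G (Suc k))) \<and> card (\<Union>(inserted G (Suc k))) \<le> 2"
  using step_cases[OF assms, of k]
proof
  assume "\<exists>e. is_edge e \<and> e \<notin> G k \<and> G (Suc k) = insert e (G k)"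
  then obtain e where e: "is_edge e" "e \<notin> G k" "G (Suc k) = insert e (G k)" by blast
  then have "inserted G (Suc k) = {e}" unfolding inserted_def by auto
  then show ?thesis using edge_card[OF e(1)] by simp
next
  assume "\<exists>e. e \<in> G k \<and> G (Suc k) = G k - {e}"
  then have "inserted G (Suc k) = {}" unfolding inserted_def by auto
  then show ?thesis by simp
qed

lemma keep_many:
  assumes "update_sequence G" "finite A"
  shows "card A \<le> card (A \<inter> G (i+d)) + d + card (A - G i)"
proof (induction d)
  case 0
  have "A = (A \<inter> G i) \<union> (A - G i)" by auto
  then have "card A \<le> card (A \<inter> G i) + card (A - G i)" by (metis card_Un_le)
  then show ?case by simp
next
  case (Suc d)
  have "card (A \<inter> G (i+d)) \<le> Suc (card (A \<inter> G (Suc (i+d))))"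
    using step_cases[OF assms(1), of "i+d"]
  proof
    assume "\<exists>e. is_edge e \<and> e \<notin> G (i+d) \<and> G (Suc (i+d)) = insert e (G (i+d))"
    then have "A \<inter> G (i+d) \<subseteq> A \<inter> G (Suc (i+d))" by auto
    then have "card (A \<inter> G (i+d)) \<le> card (A \<inter> G (Suc (i+d)))"
      using assms(2) by (intro card_mono) auto
    then show ?thesis by simp
  next
    assume "\<exists>e. e \<in> G (i+d) \<and> G (Suc (i+d)) = G (i+d) - {e}"
    then obtain x where "G (Suc (i+d)) = G (i+d) - {x}" by blast
    then have "A \<inter> G (i+d) \<subseteq> insert x (A \<inter> G (Suc (i+d)))" by auto
    then have "card (A \<inter> G (i+d)) \<le> card (insert x (A \<inter> G (Suc (i+d))))"
      using assms(2) by (intro card_mono) auto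
    also have "\<dots> \<le> Suc (card (A \<inter> G (Suc (i+d))))" using assms(2) by (simp add: card_insert_le_m1 card_insert_if)
    finally show ?thesis .
  qed
  then show ?case using Suc by simp
qed

lemma matching_lower:
  assumes "matching M E" "\<forall>e\<in>M. e \<inter> C \<noteq> {}" "finite C"
  shows "card M \<le> card C"
proof -
  define f where "f e = (SOME v. v \<in> e \<inter> C)" for e
  have f: "f e \<in> e \<inter> C" if "e \<in> M" for e
  proof -
    have "e \<inter> C \<noteq> {}" using assms(2) that by (rule bspec)
    then obtain v where "v \<in> e \<inter> C" by (metis ex_in_conv)
    then show ?thesis unfolding f_def by (rule someI)
  qed
  have "inj_on f M"
  proof (rule inj_onI)
    fix x y assume "x \<in> M" "y \<in> M" "f x = f y"
    have "f x \<in> x" using f[OF \<open>x \<in> M\<close>] by (rule IntD1)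
    moreover have "f x \<in> y" unfolding \<open>f x = f y\<close> using f[OF \<open>y \<in> M\<close>] by (rule IntD1)
    ultimately have "x \<inter> y \<noteq> {}" by blast
    moreover have "\<forall>e1\<in>M. \<forall>e2\<in>M. e1 \<noteq> e2 \<longrightarrow> e1 \<inter> e2 = {}" using assms(1) unfolding matching_def by (rule conjunct2)
    ultimately show "x = y" using \<open>x \<in> M\<close> \<open>y \<in> M\<close> by blast
  qed
  moreover have "f ` M \<subseteq> C"
  proof
    fix v assume "v \<in> f ` M"
    then obtain e where "e \<in> M" "v = f e" by blast
    then show "v \<in> C" using f[OF \<open>e \<in> M\<close>] by simp
  qed
  ultimately show ?thesis using card_inj_on_le[of f M C] assms(3) by simp
qed

theorem lemma12:
  fixes G :: "nat \<Rightarrow> 'a set set" and M :: "'a set set" and i j :: nat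
  assumes "update_sequence G"
    and "maximal_matching M (G i)"
    and "i \<le> j" and "real j \<le> real i + real (card M) / 4"
  shows "approx_min_vc 5 (cover_extend G (\<Union>M) i j) (G j)"
proof -
  obtain t where tj: "j = i + t" using assms(3) le_Suc_ex by blast
  define m where "m = card M"
  have tm: "4 * real t \<le> real m" using assms(4) tj unfolding m_def by simp
  have gi: "graph (G i)" using graph_all[OF assms(1)] .
  have MG: "M \<subseteq> G i" and mt: "matching M (G i)" using assms(2)
    unfolding maximal_matching_def matching_def by auto
  have finM: "finite M" using MG gi unfolding graph_def using finite_subset by blast
  have edM: "\<forall>e\<in>M. is_edge e" using MG gi unfolding graph_def by blast
  have finUM: "finite (\<Union>M)"
  proof (rule finite_Union[OF finM])
    fix e assume "e \<in> M" then show "finite e" using edM edge_card by blast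
  qed
  have cUM: "card (\<Union>M) \<le> 2 * m"
  proof -
    have "card (\<Union>M) \<le> (\<Sum>e\<in>M. card e)" by (rule card_Union_le_sum_card)
    also have "\<dots> = (\<Sum>e\<in>M. 2)" using edM edge_card by (intro sum.cong) auto
    finally show ?thesis unfolding m_def by simp
  qed
  define I where "I = (\<Union>k\<in>{i<..j}. \<Union>(inserted G k))"
  have insk: "finite (\<Union>(inserted G k)) \<and> card (\<Union>(inserted G k)) \<le> 2" if "k \<in> {i<..j}" for k
  proof -
    have "k \<noteq> 0" using that by auto
    then obtain k' where "k = Suc k'" using not0_implies_Suc by blast
    then show ?thesis using inserted_card[OF assms(1)] by simp
  qed
  have finI: "finite I" unfolding I_def using insk by auto
  have cI: "card I \<le> 2 * t"
  proof -
    have "card I \<le> (\<Sum>k\<in>{i<..j}. card (\<Union>(inserted G k)))" unfolding I_def by (rule card_UN_le) simp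
    also have "\<dots> \<le> (\<Sum>k\<in>{i<..j}. 2)" using insk by (intro sum_mono) auto
    finally show ?thesis using tj by simp
  qed
  have CE: "cover_extend G (\<Union>M) i j = \<Union>M \<union> I" unfolding cover_extend_def I_def by simp
  have finC: "finite (\<Union>M \<union> I)" using finUM finI by simp
  have cC: "card (\<Union>M \<union> I) \<le> 2 * m + 2 * t" using cUM cI card_Un_le[of "\<Union>M" I] by linarith
  have vc: "vertex_cover (\<Union>M \<union> I) (G j)"
    unfolding vertex_cover_def
  proof
    fix e assume e: "e \<in> G j"
    show "e \<inter> (\<Union>M \<union> I) \<noteq> {}"
    proof (cases "e \<in> G i")
      case True then show ?thesis using assms(2) unfolding maximal_matching_def by blast
    next
      case False
      then obtain k where k: "k\<in>{i<..j}" "e \<in> inserted G k"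
        using inserted_from[OF assms(1), of e i t] e tj by auto
      have "is_edge e" using graph_all[OF assms(1), of k] k(2) unfolding graph_def inserted_def by auto
      then have "e \<noteq> {}" unfolding is_edge_def by auto
      moreover have "e \<subseteq> I" using k unfolding I_def by blast
      ultimately show ?thesis by blast
    qed
  qed
  have low: "m \<le> n + t" if "finite C" "vertex_cover C (G j)" "card C = n" for C n
  proof -
    have "card M \<le> card (M \<inter> G j) + t + card (M - G i)"
      using keep_many[OF assms(1) finM, of i t] tj by simp
    moreover have "M - G i = {}" using MG by auto
    moreover have "matching (M \<inter> G j) (G j)" using mt unfolding matching_def by auto
    then have "card (M \<inter> G j) \<le> card C"
      using that matching_lower[of "M \<inter> G j" "G j" C] unfolding vertex_cover_def by blast
    ultimately show ?thesis using that unfolding m_def by simp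
  qed
  have "\<exists>n C. finite C \<and> vertex_cover C (G j) \<and> card C = n" using finC vc by blast
  from LeastI_ex[OF this]
  have "\<exists>C. finite C \<and> vertex_cover C (G j) \<and> card C = min_vc_size (G j)"
    unfolding min_vc_size_def .
  then obtain C where "finite C" "vertex_cover C (G j)" "card C = min_vc_size (G j)" by blast
  then have opt: "m \<le> min_vc_size (G j) + t" using low by blast
  have "real (card (\<Union>M \<union> I)) \<le> 2 * real m + 2 * real t" using cC by linarith
  moreover have "real m \<le> real (min_vc_size (G j)) + real t" using opt by linarith
  ultimately have "real (card (\<Union>M \<union> I)) \<le> 5 * real (min_vc_size (G j))" using tm by linarith
  then show ?thesis unfolding approx_min_vc_def CE using finC vc by simp
qed

end
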